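(* $\mathcal{L}_{\mathsf{SAFA}}$ and $\mathcal{L}_{\mathsf{KRFA}}$ are incomparable: there is a data language accepted by some SAFA but by no $k$-register automaton (for any $k$), and there is a data language accepted by some $k$-register automaton but by no SAFA.
   Context: $D$ is a fixed countably infinite set of data values; for a finite alphabet $\Sigma$, data languages are subsets of $(\Sigma\times D)^*$. A set augmented finite automaton (SAFA) is a tuple $M=(Q,\Sigma\times D,q_0,F,H,\delta)$: $Q$ finite set of states, $q_0\in Q$ initial, $F\subseteq Q$ final, $H=\{h_1,\dots,h_m\}$ a finite collection of (names of) sets of data values, $\delta\subseteq Q\times\Sigma\times C\times OP\times Q$ with $C=\{p(h_i),\,!p(h_i)\}$, $OP=\{-\}\cup\{\mathsf{ins}(h_i)\}$. Configurations are $(q,\langle S_1,\dots,S_m\rangle)$, $S_i\subseteq D$ finite; initially state $q_0$ and all sets empty. On reading $(a,d)$, a transition $(q,a,\alpha,op,q')$ from the current state may be taken if $\alpha=p(h_i)$ and $d\in S_i$, or $\alpha=\,!p(h_i)$ and $d\notin S_i$; then the state becomes $q'$ and if $op=\mathsf{ins}(h_j)$, $d$ is added to $S_j$. A word is accepted if some run reads it entirely and ends in $F$. $\mathcal{L}_{\mathsf{SAFA}}$ is the class of data languages accepted by SAFA. A $k$-register automaton is a tuple $(Q,\Sigma,\delta,\tau_0,U,q_0,F)$ with finite state set $Q$, initial state $q_0$, final states $F\subseteq Q$, initial register assignment $\tau_0:\{1,\dots,k\}\to D\cup\{\bot\}$ (the non-$\bot$ values being pairwise distinct; $\bot$ means empty),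 a partial update function $U:Q\times\Sigma\to\{1,\dots,k\}$ and transition relation $\delta\subseteq Q\times\Sigma\times\{1,\dots,k\}\times Q$. Reading $(a,d)$ in state $q$: if $d$ equals the content of some register $i$, the automaton takes a transition $(q,a,i,q')\in\delta$ (halting without consuming if none exists); if $d$ is in no register, then if $U(q,a)$ is undefined it halts, otherwise $d$ is written into register $U(q,a)$ and a transition $(q,a,U(q,a),q')\in\delta$ is taken (halting if none). A word is accepted if it is entirely consumed and the automaton ends in $F$. $\mathcal{L}_{\mathsf{KRFA}}$ is the class of data languages accepted by $k$-register automata for some $k\geq 1$. *)

theory Defs
  imports "HOL-Library.Countable_Set"
begin

datatype cond = PIn nat | NotIn nat
datatype setop = NoOp | Ins nat

record safa =
  s_states :: "nat set"
  s_alpha  :: "nat set"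
  s_init   :: nat
  s_final  :: "nat set"
  s_nsets  :: nat                         (* m: the sets are h_1, ..., h_m *)
  s_trans  :: "(nat \<times> nat \<times> cond \<times> setop \<times> nat) set"

definition cond_ok :: "nat \<Rightarrow> cond \<Rightarrow> bool" where
  "cond_ok m c = (case c of PIn i \<Rightarrow> i \<in> {1..m} | NotIn i \<Rightarrow> i \<in> {1..m})"

definition op_ok :: "nat \<Rightarrow> setop \<Rightarrow> bool" where
  "op_ok m opr = (case opr of NoOp \<Rightarrow> True | Ins i \<Rightarrow> i \<in> {1..m})"

definition safa_wf :: "safa \<Rightarrow> bool" where
  "safa_wf M \<longleftrightarrow> finite (s_states M) \<and> finite (s_alpha M) \<and>
     s_init M \<in> s_states M \<and> s_final M \<subseteq> s_states M \<and>
     (\<forall>(q,a,c,opr,q') \<in> s_trans M. q \<in> s_states M \<and> a \<in> s_alpha M \<and>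
         cond_ok (s_nsets M) c \<and> op_ok (s_nsets M) opr \<and> q' \<in> s_states M)"

definition cond_holds :: "cond \<Rightarrow> 'd \<Rightarrow> (nat \<Rightarrow> 'd set) \<Rightarrow> bool" where
  "cond_holds c d S = (case c of PIn i \<Rightarrow> d \<in> S i | NotIn i \<Rightarrow> d \<notin> S i)"

definition apply_op :: "setop \<Rightarrow> 'd \<Rightarrow> (nat \<Rightarrow> 'd set) \<Rightarrow> (nat \<Rightarrow> 'd set)" where
  "apply_op opr d S = (case opr of NoOp \<Rightarrow> S | Ins j \<Rightarrow> S(j := insert d (S j)))"

definition safa_step :: "safa \<Rightarrow> nat \<times> (nat \<Rightarrow> 'd set) \<Rightarrow> nat \<times> 'd \<Rightarrow> nat \<times> (nat \<Rightarrow> 'd set) \<Rightarrow> bool" where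
  "safa_step M cfg x cfg' \<longleftrightarrow>
     (\<exists>c opr. (fst cfg, fst x, c, opr, fst cfg') \<in> s_trans M \<and>
            cond_holds c (snd x) (snd cfg) \<and> snd cfg' = apply_op opr (snd x) (snd cfg))"

inductive safa_run :: "safa \<Rightarrow> nat \<times> (nat \<Rightarrow> 'd set) \<Rightarrow> (nat \<times> 'd) list \<Rightarrow> nat \<times> (nat \<Rightarrow> 'd set) \<Rightarrow> bool"
  for M where
  safa_nil: "safa_run M cfg [] cfg"
| safa_cons: "safa_step M cfg x cfg' \<Longrightarrow> safa_run M cfg' w cfg'' \<Longrightarrow> safa_run M cfg (x # w) cfg''"

definition safa_lang :: "safa \<Rightarrow> (nat \<times> 'd) list set" where
  "safa_lang M = {w. \<exists>cfg. safa_run M (s_init M, \<lambda>_. {}) w cfg \<and> fst cfg \<in> s_final M}"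

definition L_SAFA :: "(nat \<times> 'd) list set set" where
  "L_SAFA = {L. \<exists>M. safa_wf M \<and> L = safa_lang M}"

record krfa =
  r_k      :: nat
  r_states :: "nat set"
  r_alpha  :: "nat set"
  r_trans  :: "(nat \<times> nat \<times> nat \<times> nat) set"
  r_upd    :: "nat \<Rightarrow> nat \<Rightarrow> nat option"
  r_init   :: nat
  r_final  :: "nat set"

definition krfa_wf :: "krfa \<Rightarrow> (nat \<Rightarrow> 'd option) \<Rightarrow> bool" where
  "krfa_wf A \<tau>0 \<longleftrightarrow> r_k A \<ge> 1 \<and> finite (r_states A) \<and> finite (r_alpha A) \<and>
     r_init A \<in> r_states A \<and> r_final A \<subseteq> r_states A \<and>
     (\<forall>(q,a,i,q') \<in> r_trans A. q \<in> r_states A \<and> a \<in> r_alpha A \<and> i \<in> {1..r_k A} \<and> q' \<in> r_states A) \<and>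
     (\<forall>q a j. r_upd A q a = Some j \<longrightarrow> q \<in> r_states A \<and> a \<in> r_alpha A \<and> j \<in> {1..r_k A}) \<and>
     (\<forall>i. i \<notin> {1..r_k A} \<longrightarrow> \<tau>0 i = None) \<and>
     (\<forall>i\<in>{1..r_k A}. \<forall>j\<in>{1..r_k A}. i \<noteq> j \<longrightarrow> \<tau>0 i \<noteq> None \<longrightarrow> \<tau>0 i \<noteq> \<tau>0 j)"

definition krfa_step :: "krfa \<Rightarrow> nat \<times> (nat \<Rightarrow> 'd option) \<Rightarrow> nat \<times> 'd \<Rightarrow> nat \<times> (nat \<Rightarrow> 'd option) \<Rightarrow> bool" where
  "krfa_step A cfg x cfg' \<longleftrightarrow>
     (let q = fst cfg; \<tau> = snd cfg; a = fst x; d = snd x in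
      if (\<exists>i\<in>{1..r_k A}. \<tau> i = Some d)
      then (\<exists>i\<in>{1..r_k A}. \<tau> i = Some d \<and> (q, a, i, fst cfg') \<in> r_trans A \<and> snd cfg' = \<tau>)
      else (\<exists>j. r_upd A q a = Some j \<and> (q, a, j, fst cfg') \<in> r_trans A \<and>
                snd cfg' = \<tau>(j := Some d)))"

inductive krfa_run :: "krfa \<Rightarrow> nat \<times> (nat \<Rightarrow> 'd option) \<Rightarrow> (nat \<times> 'd) list \<Rightarrow> nat \<times> (nat \<Rightarrow> 'd option) \<Rightarrow> bool"
  for A where
  krfa_nil: "krfa_run A cfg [] cfg"
| krfa_cons: "krfa_step A cfg x cfg' \<Longrightarrow> krfa_run A cfg' w cfg'' \<Longrightarrow> krfa_run A cfg (x # w) cfg''"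

definition krfa_lang :: "krfa \<Rightarrow> (nat \<Rightarrow> 'd option) \<Rightarrow> (nat \<times> 'd) list set" where
  "krfa_lang A \<tau>0 = {w. \<exists>cfg. krfa_run A (r_init A, \<tau>0) w cfg \<and> fst cfg \<in> r_final A}"

definition L_KRFA :: "(nat \<times> 'd) list set set" where
  "L_KRFA = {L. \<exists>A \<tau>0. krfa_wf A \<tau>0 \<and> L = krfa_lang A \<tau>0}"

end

theory Submission
  imports Defs
begin

definition M1 :: safa where
  "M1 = \<lparr>s_states = {0}, s_alpha = {0}, s_init = 0, s_final = {0}, s_nsets = 1,
         s_trans = {(0, 0, NotIn 1, Ins 1, 0)}\<rparr>"

lemma M1_wf: "safa_wf M1"
  by (simp add: safa_wf_def M1_def cond_ok_def op_ok_def)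

lemma M1_fwd:
  assumes "safa_run M1 cfg w cfg'" "fst cfg = 0"
  shows "fst cfg' = 0 \<and> (\<forall>x\<in>set w. fst x = 0) \<and> distinct (map snd w) \<and>
         (\<forall>x\<in>set w. snd x \<notin> snd cfg 1)"
  using assms
proof (induction rule: safa_run.induct)
  case (safa_nil cfg)
  then show ?case by simp
next
  case (safa_cons cfg x cfg' w cfg'')
  from safa_cons.hyps(1) safa_cons.prems have st: "fst cfg' = 0" "fst x = 0"
    "snd x \<notin> snd cfg 1" "snd cfg' = (snd cfg)(1 := insert (snd x) (snd cfg 1))"
    by (auto simp: safa_step_def M1_def cond_holds_def apply_op_def)
  from safa_cons.IH[OF st(1)] st show ?case
    by auto
qed

lemma M1_bwd:
  assumes "\<forall>x\<in>set w. fst x = 0" "distinct (map snd w)" "\<forall>x\<in>set w. snd x \<notin> S 1"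
  shows "\<exists>S'. safa_run M1 (0, S) w (0, S')"
  using assms
proof (induction w arbitrary: S)
  case Nil
  then show ?case by (auto intro: safa_run.intros)
next
  case (Cons x w)
  obtain a d where x: "x = (a, d)" by (cases x)
  let ?S = "S(1 := insert d (S 1))"
  have "\<exists>S'. safa_run M1 (0, ?S) w (0, S')"
    using Cons.prems x by (intro Cons.IH) auto
  then obtain S' where r: "safa_run M1 (0, ?S) w (0, S')" by blast
  have "safa_step M1 (0, S) x (0, ?S)"
    using Cons.prems x
    by (auto simp: safa_step_def M1_def cond_holds_def apply_op_def)
  with r show ?case by (blast intro: safa_run.intros)
qed

lemma M1_lang: "safa_lang M1 = {w. (\<forall>x\<in>set w. fst x = 0) \<and> distinct (map snd w)}"
proof -
  have i: "s_init M1 = 0" "s_final M1 = {0}" by (simp_all add: M1_def)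
  show ?thesis
    unfolding safa_lang_def i
    using M1_fwd[where cfg = "(0, \<lambda>_. {})"] M1_bwd[where S = "\<lambda>_. {}"]
    by fastforce
qed

lemma krfa_run_snoc:
  "krfa_run A c (w @ [x]) c'' \<Longrightarrow> \<exists>c'. krfa_run A c w c' \<and> krfa_step A c' x c''"
proof (induction w arbitrary: c)
  case Nil
  then show ?case
    by (auto elim!: krfa_run.cases intro: krfa_run.intros)
next
  case (Cons y w)
  from Cons.prems obtain c1 where "krfa_step A c y c1" "krfa_run A c1 (w @ [x]) c''"
    by (auto elim: krfa_run.cases)
  with Cons.IH show ?case by (blast intro: krfa_run.intros)
qed

lemma krfa_run_app:
  "krfa_run A c w c' \<Longrightarrow> krfa_step A c' x c'' \<Longrightarrow> krfa_run A c (w @ [x]) c''"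
  by (induction rule: krfa_run.induct) (auto intro: krfa_run.intros)

lemma krfa_run_regs:
  "krfa_run A c w c' \<Longrightarrow> \<forall>i. snd c' i = snd c i \<or> (\<exists>x\<in>set w. snd c' i = Some (snd x))"
proof (induction rule: krfa_run.induct)
  case (krfa_nil cfg)
  then show ?case by simp
next
  case (krfa_cons cfg x cfg' w cfg'')
  have this_step: "\<forall>i. snd cfg' i = snd cfg i \<or> snd cfg' i = Some (snd x)"
    using krfa_cons.hyps(1) unfolding krfa_step_def Let_def
    by (auto split: if_splits)
  show ?case
  proof
    fix i
    from krfa_cons.IH have "snd cfg'' i = snd cfg' i \<or> (\<exists>y\<in>set w. snd cfg'' i = Some (snd y))" by blast
    moreover from this_step have "snd cfg' i = snd cfg i \<or> snd cfg' i = Some (snd x)" by blast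
    ultimately show "snd cfg'' i = snd cfg i \<or> (\<exists>y\<in>set (x # w). snd cfg'' i = Some (snd y))"
      by auto
  qed
qed

lemma M1_not_krfa:
  assumes inf: "infinite (UNIV :: 'd set)"
  shows "(safa_lang M1 :: (nat \<times> 'd) list set) \<notin> L_KRFA"
proof
  assume "(safa_lang M1 :: (nat \<times> 'd) list set) \<in> L_KRFA"
  then obtain A and \<tau>0 :: "nat \<Rightarrow> 'd option" where wf: "krfa_wf A \<tau>0"
    and L: "safa_lang M1 = krfa_lang A \<tau>0"
    unfolding L_KRFA_def by blast
  define k where "k = r_k A"
  obtain D :: "'d set" where D: "finite D" "card D = Suc k"
    using infinite_arbitrarily_large[OF inf] by blast
  obtain ds where ds: "set ds = D" "distinct ds"
    using finite_distinct_list[OF D(1)] by blast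
  have lds: "length ds = Suc k" using ds D distinct_card by fastforce
  define R0 where "R0 = (the \<circ> \<tau>0) ` {1..k}"
  have "finite (D \<union> R0)" using D unfolding R0_def by simp
  then obtain e where e: "e \<notin> D \<union> R0"
    using ex_new_if_finite[OF inf] by blast
  define w where "w = map (\<lambda>d. (0::nat, d)) ds"
  have "w @ [(0, e)] \<in> safa_lang M1"
    unfolding M1_lang w_def using ds e by (auto simp: comp_def)
  then obtain cfg where r: "krfa_run A (r_init A, \<tau>0) (w @ [(0, e)]) cfg" "fst cfg \<in> r_final A"
    using L unfolding krfa_lang_def by blast
  obtain c' where c': "krfa_run A (r_init A, \<tau>0) w c'" "krfa_step A c' (0, e) cfg"
    using krfa_run_snoc[OF r(1)] by blast
  have regs: "\<forall>i. snd c' i = \<tau>0 i \<or> (\<exists>x\<in>set w. snd c' i = Some (snd x))"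
    using krfa_run_regs[OF c'(1)] by simp
  have enot: "\<not> (\<exists>i\<in>{1..k}. snd c' i = Some e)"
  proof
    assume "\<exists>i\<in>{1..k}. snd c' i = Some e"
    then obtain i where i: "i \<in> {1..k}" "snd c' i = Some e" by blast
    from regs i consider "\<tau>0 i = Some e" | "\<exists>x\<in>set w. Some e = Some (snd x)" by metis
    then show False
    proof cases
      case 1
      then have "e \<in> R0" using i unfolding R0_def by force
      with e show ?thesis by blast
    next
      case 2
      then show ?thesis using e ds unfolding w_def by auto
    qed
  qed
  obtain j where j: "r_upd A (fst c') 0 = Some j" "(fst c', 0, j, fst cfg) \<in> r_trans A"
    using c'(2) enot unfolding krfa_step_def Let_def k_def by (auto split: if_splits)
  have "\<exists>d\<in>D. \<forall>i\<in>{1..k}. snd c' i \<noteq> Some d"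
  proof (rule ccontr)
    assume "\<not> ?thesis"
    then have "D \<subseteq> (the \<circ> snd c') ` {1..k}" by force
    then have "card D \<le> card ((the \<circ> snd c') ` {1..k})" by (intro card_mono) auto
    also have "\<dots> \<le> card {1..k}" by (rule card_image_le) simp
    finally show False using D by simp
  qed
  then obtain d where d: "d \<in> D" "\<forall>i\<in>{1..k}. snd c' i \<noteq> Some d" by blast
  have "krfa_step A c' (0, d) (fst cfg, (snd c')(j := Some d))"
    using d j unfolding krfa_step_def Let_def k_def by auto
  from krfa_run_app[OF c'(1) this] r(2)
  have "w @ [(0, d)] \<in> krfa_lang A \<tau>0" unfolding krfa_lang_def by force
  then have "w @ [(0, d)] \<in> safa_lang M1" using L by simp
  then show False unfolding M1_lang w_def using d ds by (auto simp: comp_def)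
qed

definition A2 :: krfa where
  "A2 = \<lparr>r_k = 1, r_states = {0, 1}, r_alpha = {0}, r_trans = {(0, 0, 1, 1)},
         r_upd = (\<lambda>_ _. None), r_init = 0, r_final = {1}\<rparr>"

lemma safa_single:
  assumes "[(a, c)] \<in> safa_lang M"
  shows "[(a, c')] \<in> safa_lang M"
proof -
  from assms obtain cfg where r: "safa_run M (s_init M, \<lambda>_. {}) [(a, c)] cfg" "fst cfg \<in> s_final M"
    unfolding safa_lang_def by blast
  from r(1) have st: "safa_step M (s_init M, \<lambda>_. {}) (a, c) cfg"
    by (auto elim!: safa_run.cases)
  then obtain cn opr where t: "(s_init M, a, cn, opr, fst cfg) \<in> s_trans M"
    "cond_holds cn c (\<lambda>_. {})"
    unfolding safa_step_def by auto
  have "cond_holds cn c' (\<lambda>_. {})" using t(2) by (cases cn) (auto simp: cond_holds_def)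
  then have "safa_step M (s_init M, \<lambda>_. {}) (a, c') (fst cfg, apply_op opr c' (\<lambda>_. {}))"
    using t(1) unfolding safa_step_def by auto
  then have "safa_run M (s_init M, \<lambda>_. {}) [(a, c')] (fst cfg, apply_op opr c' (\<lambda>_. {}))"
    by (blast intro: safa_run.intros)
  with r(2) show ?thesis unfolding safa_lang_def by force
qed

lemma part2:
  assumes inf: "infinite (UNIV :: 'd set)"
  shows "\<exists>L :: (nat \<times> 'd) list set. L \<in> L_KRFA \<and> L \<notin> L_SAFA"
proof -
  obtain c c' :: 'd where cc: "c \<noteq> c'"
    using inf by (metis UNIV_I finite.simps insertCI subsetI finite_subset)
  define \<tau>0 where "\<tau>0 = (\<lambda>i::nat. if i = 1 then Some c else None)"
  have wf: "krfa_wf A2 \<tau>0" unfolding krfa_wf_def A2_def \<tau>0_def by auto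
  have "krfa_step A2 (0, \<tau>0) (0, c) (1, \<tau>0)"
    unfolding krfa_step_def A2_def \<tau>0_def by auto
  then have in1: "[(0, c)] \<in> krfa_lang A2 \<tau>0"
    unfolding krfa_lang_def by (auto simp: A2_def intro!: exI[of _ "(1, \<tau>0)"] krfa_run.intros)
  have out: "[(0, c')] \<notin> krfa_lang A2 \<tau>0"
  proof
    assume "[(0, c')] \<in> krfa_lang A2 \<tau>0"
    then obtain cfg where "krfa_run A2 (r_init A2, \<tau>0) [(0, c')] cfg" unfolding krfa_lang_def by blast
    then have "krfa_step A2 (r_init A2, \<tau>0) (0, c') cfg" by (auto elim!: krfa_run.cases)
    then show False using cc unfolding krfa_step_def A2_def \<tau>0_def Let_def by (auto split: if_splits)
  qed
  have "krfa_lang A2 \<tau>0 \<notin> L_SAFA"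
  proof
    assume "krfa_lang A2 \<tau>0 \<in> L_SAFA"
    then obtain M where "krfa_lang A2 \<tau>0 = safa_lang M" unfolding L_SAFA_def by blast
    with in1 out safa_single show False by metis
  qed
  moreover have "krfa_lang A2 \<tau>0 \<in> L_KRFA" unfolding L_KRFA_def using wf by blast
  ultimately show ?thesis by blast
qed

theorem theorem15:
  assumes "infinite (UNIV :: 'd set)" and "countable (UNIV :: 'd set)"
  shows "(\<exists>L :: (nat \<times> 'd) list set. L \<in> L_SAFA \<and> L \<notin> L_KRFA) \<and>
         (\<exists>L :: (nat \<times> 'd) list set. L \<in> L_KRFA \<and> L \<notin> L_SAFA)"
proof
  show "\<exists>L :: (nat \<times> 'd) list set. L \<in> L_SAFA \<and> L \<notin> L_KRFA"
    using M1_not_krfa[OF assms(1)] M1_wf unfolding L_SAFA_def by blast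
  show "\<exists>L :: (nat \<times> 'd) list set. L \<in> L_KRFA \<and> L \<notin> L_SAFA"
    using part2[OF assms(1)] .
qed

end
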